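(* Let $X$ be a nonempty set, $\circ:X\times X\to X$ a binary operation, and $p,q>0$ constants. If $f,g:X\to\mathbb{R}$ are $(\circ,p,q)$-convex functions satisfying \[ 0\leq \max(f(x),g(x))\qquad (x\in X), \] then there exists $\lambda\in[0,1]$ such that \[ 0\leq \lambda f(x)+(1-\lambda)g(x)\qquad (x\in X). \]
   Context: Given a nonempty set $X$, a binary operation $\circ:X\times X\to X$ and constants $p,q>0$, a function $f:X\to\mathbb{R}$ is called $(\circ,p,q)$-convex if $f(x\circ y)\leq p f(x)+q f(y)$ for all $x,y\in X$. *)

theory Defs
  imports Main Complex_Main
begin

definition op_pq_convex :: "('a \<Rightarrow> 'a \<Rightarrow> 'a) \<Rightarrow> real \<Rightarrow> real \<Rightarrow> ('a \<Rightarrow> real) \<Rightarrow> bool" where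
  "op_pq_convex op p q f \<longleftrightarrow> (\<forall>x y. f (op x y) \<le> p * f x + q * f y)"

end

theory Submission
  imports Defs
begin

lemma pow_pt:
  assumes p: "p > 0" and q: "q > 0"
    and cf: "op_pq_convex op p q f" and cg: "op_pq_convex op p q g"
  shows "\<exists>x. f x \<le> (p+q)^d * f c \<and> g x \<le> (p+q)^d * g c"
proof (induction d)
  case 0
  then show ?case by auto
next
  case (Suc d)
  then obtain x where x: "f x \<le> (p+q)^d * f c" "g x \<le> (p+q)^d * g c" by blast
  have "f (op x x) \<le> p * f x + q * f x" using cf unfolding op_pq_convex_def by blast
  also have "\<dots> = (p+q) * f x" by algebra
  also have "\<dots> \<le> (p+q) * ((p+q)^d * f c)" using x(1) p q by (intro mult_left_mono) auto
  finally have 1: "f (op x x) \<le> (p+q)^Suc d * f c" by simp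
  have "g (op x x) \<le> p * g x + q * g x" using cg unfolding op_pq_convex_def by blast
  also have "\<dots> = (p+q) * g x" by algebra
  also have "\<dots> \<le> (p+q) * ((p+q)^d * g c)" using x(2) p q by (intro mult_left_mono) auto
  finally have 2: "g (op x x) \<le> (p+q)^Suc d * g c" by simp
  from 1 2 show ?case by blast
qed

lemma approx:
  assumes p: "p > 0" and q: "q > 0"
    and cf: "op_pq_convex op p q f" and cg: "op_pq_convex op p q g"
  shows "0 \<le> t \<Longrightarrow> t \<le> (p+q)^d \<Longrightarrow> \<exists>x m. f x \<le> m * f a + ((p+q)^d - m) * f b
     \<and> g x \<le> m * g a + ((p+q)^d - m) * g b \<and> \<bar>m - t\<bar> \<le> (max p q)^d"
proof (induction d arbitrary: t)
  case 0
  then show ?case by (intro exI[of _ b] exI[of _ 0]) auto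
next
  case (Suc d)
  define c where "c = (p+q)^d"
  have c0: "c > 0" unfolding c_def using p q by simp
  have cs: "(p+q)^Suc d = p*c + q*c" unfolding c_def by (simp add: algebra_simps)
  have M: "max p q * max p q ^ d = max p q ^ Suc d" by simp
  have Mp: "max p q ^ d \<ge> 0" using p by simp
  show ?case
  proof (cases "t \<ge> p * c")
    case True
    define t2 where "t2 = (t - p*c)/q"
    have "0 \<le> t2" unfolding t2_def using True q by simp
    moreover have "t2 \<le> c" unfolding t2_def using Suc.prems cs q by (simp add: divide_simps algebra_simps)
    ultimately obtain y m2 where y: "f y \<le> m2 * f a + (c - m2) * f b"
      "g y \<le> m2 * g a + (c - m2) * g b" "\<bar>m2 - t2\<bar> \<le> (max p q)^d"
      using Suc.IH[of t2] unfolding c_def by blast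
    obtain xa where xa: "f xa \<le> c * f a" "g xa \<le> c * g a"
      using pow_pt[OF p q cf cg] unfolding c_def by blast
    define m where "m = p*c + q*m2"
    have "f (op xa y) \<le> p * f xa + q * f y" using cf unfolding op_pq_convex_def by blast
    also have "\<dots> \<le> p * (c * f a) + q * (m2 * f a + (c - m2) * f b)"
      using xa y p q by (intro add_mono mult_left_mono) auto
    also have "\<dots> = m * f a + ((p+q)^Suc d - m) * f b" unfolding m_def cs by algebra
    finally have 1: "f (op xa y) \<le> m * f a + ((p+q)^Suc d - m) * f b" .
    have "g (op xa y) \<le> p * g xa + q * g y" using cg unfolding op_pq_convex_def by blast
    also have "\<dots> \<le> p * (c * g a) + q * (m2 * g a + (c - m2) * g b)"
      using xa y p q by (intro add_mono mult_left_mono) auto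
    also have "\<dots> = m * g a + ((p+q)^Suc d - m) * g b" unfolding m_def cs by algebra
    finally have 2: "g (op xa y) \<le> m * g a + ((p+q)^Suc d - m) * g b" .
    have "m - t = q * (m2 - t2)" unfolding m_def t2_def using q by (simp add: field_simps)
    hence "\<bar>m - t\<bar> = q * \<bar>m2 - t2\<bar>" using q by (simp add: abs_mult)
    also have "\<dots> \<le> q * max p q ^ d" using y(3) q by (intro mult_left_mono) auto
    also have "\<dots> \<le> max p q * max p q ^ d" using Mp by (intro mult_right_mono) auto
    finally have 3: "\<bar>m - t\<bar> \<le> max p q ^ Suc d" by simp
    from 1 2 3 show ?thesis by blast
  next
    case False
    define t1 where "t1 = t/p"
    have "0 \<le> t1" unfolding t1_def using Suc.prems p by simp
    moreover have "t1 \<le> c" unfolding t1_def using False p by (simp add: divide_simps mult.commute)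
    ultimately obtain y m1 where y: "f y \<le> m1 * f a + (c - m1) * f b"
      "g y \<le> m1 * g a + (c - m1) * g b" "\<bar>m1 - t1\<bar> \<le> (max p q)^d"
      using Suc.IH[of t1] unfolding c_def by blast
    obtain xb where xb: "f xb \<le> c * f b" "g xb \<le> c * g b"
      using pow_pt[OF p q cf cg] unfolding c_def by blast
    define m where "m = p*m1"
    have "f (op y xb) \<le> p * f y + q * f xb" using cf unfolding op_pq_convex_def by blast
    also have "\<dots> \<le> p * (m1 * f a + (c - m1) * f b) + q * (c * f b)"
      using xb y p q by (intro add_mono mult_left_mono) auto
    also have "\<dots> = m * f a + ((p+q)^Suc d - m) * f b" unfolding m_def cs by algebra
    finally have 1: "f (op y xb) \<le> m * f a + ((p+q)^Suc d - m) * f b" .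
    have "g (op y xb) \<le> p * g y + q * g xb" using cg unfolding op_pq_convex_def by blast
    also have "\<dots> \<le> p * (m1 * g a + (c - m1) * g b) + q * (c * g b)"
      using xb y p q by (intro add_mono mult_left_mono) auto
    also have "\<dots> = m * g a + ((p+q)^Suc d - m) * g b" unfolding m_def cs by algebra
    finally have 2: "g (op y xb) \<le> m * g a + ((p+q)^Suc d - m) * g b" .
    have "m - t = p * (m1 - t1)" unfolding m_def t1_def using p by (simp add: field_simps)
    hence "\<bar>m - t\<bar> = p * \<bar>m1 - t1\<bar>" using p by (simp add: abs_mult)
    also have "\<dots> \<le> p * max p q ^ d" using y(3) p by (intro mult_left_mono) auto
    also have "\<dots> \<le> max p q * max p q ^ d" using Mp by (intro mult_right_mono) auto
    finally have 3: "\<bar>m - t\<bar> \<le> max p q ^ Suc d" by simp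
    from 1 2 3 show ?thesis by blast
  qed
qed

lemma key:
  assumes p: "p > 0" and q: "q > 0"
    and cf: "op_pq_convex op p q f" and cg: "op_pq_convex op p q g"
    and mx: "\<And>x. 0 \<le> max (f x) (g x)"
    and fa: "f a < 0" and gb: "g b < 0"
  shows "f a * g b \<le> g a * f b"
proof (rule ccontr)
  assume H: "\<not> ?thesis"
  define \<alpha> where "\<alpha> = - f a"
  define \<beta> where "\<beta> = g a"
  define \<gamma> where "\<gamma> = f b"
  define \<delta> where "\<delta> = - g b"
  have al: "\<alpha> > 0" "\<delta> > 0" using fa gb unfolding \<alpha>_def \<delta>_def by auto
  have be: "\<beta> \<ge> 0" "\<gamma> \<ge> 0" using mx[of a] mx[of b] fa gb unfolding \<beta>_def \<gamma>_def by auto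
  have H2: "\<beta> * \<gamma> < \<alpha> * \<delta>" using H unfolding \<alpha>_def \<beta>_def \<gamma>_def \<delta>_def by simp
  define lo where "lo = \<gamma> / (\<alpha> + \<gamma>)"
  define hi where "hi = \<delta> / (\<beta> + \<delta>)"
  have lohi: "lo < hi" unfolding lo_def hi_def using al be H2
    by (simp add: divide_simps algebra_simps)
  have lo0: "0 \<le> lo" unfolding lo_def using al be by simp
  have hi1: "hi \<le> 1" unfolding hi_def using al be by simp
  define w where "w = (hi - lo)/2"
  define c where "c = p + q"
  define M where "M = max p q"
  have c0: "c > 0" unfolding c_def using p q by simp
  have rho: "M / c < 1" unfolding M_def c_def using p q by (simp add: divide_simps)
  have w0: "w > 0" unfolding w_def using lohi by simp
  obtain d where d: "(M/c)^d < w" using real_arch_pow_inv[OF w0 rho] by blast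
  define t where "t = (lo + hi)/2 * c^d"
  have cd: "c^d > 0" using c0 by simp
  have "0 \<le> t" unfolding t_def using lo0 lohi cd by simp
  moreover have "t \<le> c^d" unfolding t_def using hi1 lohi cd
    by (simp add: mult_le_cancel_right1)
  ultimately obtain x m where x: "f x \<le> m * f a + (c^d - m) * f b"
      "g x \<le> m * g a + (c^d - m) * g b" "\<bar>m - t\<bar> \<le> M^d"
    using approx[OF p q cf cg, of t d a b] unfolding c_def M_def by blast
  define \<theta> where "\<theta> = m / c^d"
  have mth: "m = \<theta> * c^d" unfolding \<theta>_def using cd c0 by simp
  have "\<theta> - (lo+hi)/2 = (m - t) / c^d" unfolding \<theta>_def t_def using cd c0
    by (simp add: diff_divide_distrib)
  hence "\<bar>\<theta> - (lo+hi)/2\<bar> = \<bar>m - t\<bar> / c^d" using cd by simp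
  also have "\<dots> \<le> M^d / c^d" using x(3) cd by (simp add: divide_right_mono)
  also have "\<dots> = (M/c)^d" by (simp add: power_divide)
  finally have "\<bar>\<theta> - (lo+hi)/2\<bar> < w" using d by simp
  hence "\<theta> - (lo+hi)/2 < w" "(lo+hi)/2 - \<theta> < w" by linarith+
  hence th: "lo < \<theta>" "\<theta> < hi" unfolding w_def by (simp_all add: field_simps)
  have A1: "\<gamma> < \<theta> * (\<alpha> + \<gamma>)" using th(1) al be unfolding lo_def by (simp add: divide_simps)
  have A2: "\<theta> * (\<beta> + \<delta>) < \<delta>" using th(2) al be unfolding hi_def by (simp add: divide_simps)
  have "f x \<le> c^d * (\<gamma> - \<theta> * (\<alpha> + \<gamma>))" using x(1) unfolding mth \<alpha>_def \<gamma>_def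
    by (simp add: algebra_simps)
  also have "\<dots> < 0" using A1 cd by (simp add: mult_pos_neg)
  finally have "f x < 0" .
  moreover have "g x \<le> c^d * (\<theta> * (\<beta> + \<delta>) - \<delta>)" using x(2) unfolding mth \<beta>_def \<delta>_def
    by (simp add: algebra_simps)
  moreover have "c^d * (\<theta> * (\<beta> + \<delta>) - \<delta>) < 0" using A2 cd by (simp add: mult_pos_neg)
  ultimately show False using mx[of x] by linarith
qed

theorem theorem3p5:
  fixes op :: "'a \<Rightarrow> 'a \<Rightarrow> 'a" and p q :: real and f g :: "'a \<Rightarrow> real"
  assumes "p > 0" and "q > 0"
    and "op_pq_convex op p q f" and "op_pq_convex op p q g"
    and "\<And>x. 0 \<le> max (f x) (g x)"
  shows "\<exists>lam\<in>{0..1::real}. \<forall>x. 0 \<le> lam * f x + (1 - lam) * g x"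
proof (cases "\<forall>x. g x \<ge> 0")
  case True
  then show ?thesis by (intro bexI[of _ 0]) auto
next
  case False
  then obtain b0 where b0: "g b0 < 0" by (auto simp: not_le)
  define B where "B = {x. g x < 0}"
  define s where "s = (\<lambda>x. - g x / (f x - g x))"
  have fB: "f x \<ge> 0" if "x \<in> B" for x using assms(5)[of x] that unfolding B_def by auto
  have s1: "s x \<le> 1" "s x > 0" if "x \<in> B" for x
    using fB[OF that] that unfolding B_def s_def by (auto simp: divide_simps)
  define lam where "lam = Sup (s ` B)"
  have ne: "s ` B \<noteq> {}" using b0 unfolding B_def by auto
  have bdd: "bdd_above (s ` B)" using s1 by (auto intro: bdd_aboveI[of _ 1])
  have sl: "s x \<le> lam" if "x \<in> B" for x unfolding lam_def using bdd that by (intro cSup_upper) auto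
  have l1: "lam \<le> 1" unfolding lam_def using ne s1 by (intro cSup_least) auto
  have l0: "lam \<ge> 0" using sl[of b0] s1[of b0] b0 unfolding B_def by auto
  have main: "0 \<le> lam * f x + (1 - lam) * g x" for x
  proof (cases "f x < 0")
    case True
    have gx: "g x \<ge> 0" using assms(5)[of x] True by auto
    have "lam \<le> g x / (g x - f x)" unfolding lam_def
    proof (rule cSup_least[OF ne])
      fix y assume "y \<in> s ` B"
      then obtain b where b: "b \<in> B" "y = s b" by blast
      have gb: "g b < 0" using b unfolding B_def by auto
      have fb: "f b \<ge> 0" using fB[OF b(1)] .
      have k: "f x * g b \<le> g x * f b" using key[OF assms(1-5) True gb] .
      show "y \<le> g x / (g x - f x)" unfolding b s_def using True gx gb fb k
        by (simp add: divide_simps algebra_simps)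
    qed
    hence "lam * (g x - f x) \<le> g x" using True gx by (simp add: divide_simps)
    then show ?thesis by (simp add: algebra_simps)
  next
    case False
    show ?thesis
    proof (cases "g x < 0")
      case True
      have "s x \<le> lam" using sl True unfolding B_def by auto
      hence "- g x \<le> lam * (f x - g x)" unfolding s_def using True False
        by (simp add: divide_simps)
      then show ?thesis by (simp add: algebra_simps)
    next
      case False2: False
      then show ?thesis using False l0 l1 by (simp add: add_nonneg_nonneg mult_nonneg_nonneg)
    qed
  qed
  show ?thesis using main l0 l1 by (intro bexI[of _ lam]) auto
qed

end
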